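(* Let $n$ be a positive integer, let $W\in M(n,n;\mathbb F_2)$ have all diagonal entries equal to $1$, and let $c\in\mathbb F_2^n$. Then the mean value of $|Wx+c|$ over all $x\in\mathbb F_2^n$ is $n/2$. In particular, $M(W,c)\ge n/2$, and $M(W,c)>n/2$ if the number of indices $i\in\{1,\dots,n\}$ with $c_i=1$ is not equal to $n/2$.
   Context: $\mathbb F_2=\{0,1\}$ is the field with two elements. For $u\in\mathbb F_2^n$, $|u|$ denotes the Hamming weight of $u$ (number of entries equal to $1$). $M(W,c)=\max\{|Wx+c| : x\in\mathbb F_2^n\}$. *)

theory Defs
  imports "HOL-Analysis.Analysis" "HOL-Library.Z2"
begin

text \<open>F_2 is the field type bit from HOL-Library.Z2; F_2^n is bit^'n and
  n x n matrices over F_2 are bit^'n^'n, with n = CARD('n).\<close>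

definition hweight :: "bit ^ 'n \<Rightarrow> nat" where
  "hweight u = card {i. u $ i = 1}"

definition Mval :: "bit ^ 'n ^ 'n \<Rightarrow> bit ^ 'n \<Rightarrow> nat" where
  "Mval W c = Max ((\<lambda>x. hweight (W *v x + c)) ` UNIV)"

end

theory Submission
  imports Defs
begin

instance bit :: finite
proof
  have "(UNIV::bit set) = {0,1}" by (auto intro: bit.exhaust)
  then show "finite (UNIV::bit set)" by (metis finite.emptyI finite_insert)
qed

lemma ind_card: "finite A \<Longrightarrow> (\<Sum>x\<in>A. if P x then 1 else (0::nat)) = card {x\<in>A. P x}"
  by (simp add: sum.inter_filter[symmetric])

lemma bit_cases2: "(b::bit) = 0 \<or> b = 1"
  by (cases b) auto

lemma flip_coord:
  fixes W :: "bit ^ 'n ^ 'n"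
  assumes "W $ i $ i = 1"
  shows "(W *v (x + axis i 1) + c) $ i = (W *v x + c) $ i + 1"
proof -
  have "W *v (x + axis i 1) = W *v x + W *v axis i 1"
    by (simp add: matrix_vector_right_distrib)
  moreover have "(W *v axis i 1) $ i = 1"
    using assms by (simp add: matrix_vector_mult_def axis_def if_distrib sum.delta cong: if_cong)
  ultimately show ?thesis by (simp add: algebra_simps)
qed

lemma half_card:
  fixes W :: "bit ^ 'n ^ 'n"
  assumes "W $ i $ i = 1"
  shows "2 * card {x::bit^'n. (W *v x + c) $ i = 1} = card (UNIV :: (bit^'n) set)"
proof -
  let ?A = "{x::bit^'n. (W *v x + c) $ i = 1}"
  let ?f = "\<lambda>x::bit^'n. x + axis i 1"
  have inv: "?f (?f x) = x" for x
    by (simp add: vec_eq_iff axis_def)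
  have bij: "bij_betw ?f ?A (- ?A)"
  proof (rule bij_betw_byWitness[where f'="?f"])
    show "\<forall>a\<in>?A. ?f (?f a) = a" using inv by blast
    show "\<forall>a\<in>- ?A. ?f (?f a) = a" using inv by blast
    show "?f ` ?A \<subseteq> - ?A"
    proof
      fix y assume "y \<in> ?f ` ?A"
      then obtain x where x: "x \<in> ?A" "y = ?f x" by blast
      have "(W *v x + c) $ i = 1" using x(1) by simp
      hence "(W *v ?f x + c) $ i = 0" using flip_coord[OF assms, of x c] by simp
      then show "y \<in> - ?A" using x(2) by simp
    qed
    show "?f ` (- ?A) \<subseteq> ?A"
    proof
      fix y assume "y \<in> ?f ` (- ?A)"
      then obtain x where x: "x \<in> - ?A" "y = ?f x" by blast
      have "(W *v x + c) $ i = 0" using x(1) bit_cases2 by auto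
      then show "y \<in> ?A" using x(2) flip_coord[OF assms, of x c] by simp
    qed
  qed
  hence "card ?A = card (- ?A)" by (rule bij_betw_same_card)
  moreover have "card ?A + card (- ?A) = card (UNIV :: (bit^'n) set)"
    using card_Un_disjoint[of ?A "- ?A"] by (simp add: Compl_partition)
  ultimately show ?thesis by simp
qed

lemma sum_hweight:
  fixes W :: "bit ^ 'n ^ 'n"
  assumes diag: "\<forall>i. W $ i $ i = 1"
  shows "2 * (\<Sum>x\<in>(UNIV :: (bit ^ 'n) set). hweight (W *v x + c))
         = CARD('n) * card (UNIV :: (bit^'n) set)"
proof -
  have "(\<Sum>x\<in>(UNIV :: (bit ^ 'n) set). hweight (W *v x + c))
      = (\<Sum>x\<in>(UNIV :: (bit ^ 'n) set). \<Sum>i\<in>(UNIV::'n set). if (W *v x + c) $ i = 1 then 1 else 0)"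
    unfolding hweight_def by (simp add: sum.If_cases)
  also have "\<dots> = (\<Sum>i\<in>(UNIV::'n set). \<Sum>x\<in>(UNIV :: (bit ^ 'n) set). if (W *v x + c) $ i = 1 then 1 else 0)"
    by (rule sum.swap)
  also have "\<dots> = (\<Sum>i\<in>(UNIV::'n set). card {x::bit^'n. (W *v x + c) $ i = 1})"
    by (intro sum.cong refl) (subst ind_card, auto)
  finally have "2 * (\<Sum>x\<in>(UNIV :: (bit ^ 'n) set). hweight (W *v x + c))
      = (\<Sum>i\<in>(UNIV::'n set). 2 * card {x::bit^'n. (W *v x + c) $ i = 1})"
    by (simp add: sum_distrib_left)
  also have "\<dots> = (\<Sum>i\<in>(UNIV::'n set). card (UNIV :: (bit^'n) set))"
    by (intro sum.cong refl) (rule half_card, use diag in blast)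
  finally show ?thesis by simp
qed

theorem lemma3p1:
  fixes W :: "bit ^ 'n ^ 'n" and c :: "bit ^ 'n"
  assumes diag: "\<forall>i. W $ i $ i = 1"
  shows "(\<Sum>x\<in>(UNIV :: (bit ^ 'n) set). real (hweight (W *v x + c)))
           / real (card (UNIV :: (bit ^ 'n) set)) = real CARD('n) / 2
         \<and> real (Mval W c) \<ge> real CARD('n) / 2
         \<and> (real (hweight c) \<noteq> real CARD('n) / 2 \<longrightarrow> real (Mval W c) > real CARD('n) / 2)"
proof -
  let ?U = "UNIV :: (bit ^ 'n) set"
  let ?N = "real (card ?U)"
  let ?g = "\<lambda>x. real (hweight (W *v x + c))"
  let ?m = "real CARD('n) / 2"
  have Npos: "?N > 0" by (simp add: card_gt_0_iff)
  have S: "(\<Sum>x\<in>?U. ?g x) = ?m * ?N"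
  proof -
    have "real (2 * (\<Sum>x\<in>?U. hweight (W *v x + c))) = real (CARD('n) * card ?U)"
      using sum_hweight[OF diag, of c] by simp
    thus ?thesis by (simp add: of_nat_sum)
  qed
  have A: "(\<Sum>x\<in>?U. ?g x) / ?N = ?m" using S Npos by simp
  have Mge: "?g x \<le> real (Mval W c)" for x
    unfolding Mval_def by simp
  have B: "real (Mval W c) \<ge> ?m"
  proof (rule ccontr)
    assume "\<not> ?thesis"
    hence "\<forall>x. ?g x < ?m" using Mge by (meson less_le_trans not_le)
    hence "(\<Sum>x\<in>?U. ?g x) < (\<Sum>x\<in>?U. ?m)"
      by (intro sum_strict_mono) auto
    thus False using S by simp
  qed
  have C: "real (Mval W c) > ?m" if h: "real (hweight c) \<noteq> ?m"
  proof (rule ccontr)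
    assume "\<not> ?thesis"
    hence le: "\<forall>x. ?g x \<le> ?m" using Mge by (meson order_trans not_le)
    have g0: "?g 0 = real (hweight c)" by simp
    show False
    proof (cases "real (hweight c) < ?m")
      case True
      have "(\<Sum>x\<in>?U. ?g x) < (\<Sum>x\<in>?U. ?m)"
        apply (rule sum_strict_mono_ex1)
          apply simp
         using le apply blast
        apply (rule bexI[of _ 0])
        using True g0 by auto
      thus False using S by simp
    next
      case False
      thus False using le[rule_format, of 0] g0 h by simp
    qed
  qed
  show ?thesis using A B C by blast
qed

end
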